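(* Let $d\ge3$ and let $\mathbf z_1,\dots,\mathbf z_d\in\mathbb Z^d$ be a basis of $\mathbb Z^d$. Suppose $|\underline{\mathbf z_3}|\geq|\underline{\mathbf z_1}|$ and $\det\underline\Lambda_{2,d-1}>3|\underline{\mathbf z_2}|\det\underline\Lambda_{2,d-2}$. Then $\mathfrak S_2\subset\operatorname{int}\mathfrak S_1$ and $R_2<R_1/3$.
   Context: $|\cdot|$ is the Euclidean norm. For $\mathbf x=(x_1,\dots,x_d)\in\mathbb R^d$ write $\underline{\mathbf x}=(x_1,\dots,x_{d-1})$. Let $\pi_d=\{\mathbf x\in\mathbb R^d:x_d=1\}$. For given vectors $\mathbf z_1,\mathbf z_2,\dots$: $\det\underline\Lambda_{k,l}=|\underline{\mathbf z_k}\wedge\dots\wedge\underline{\mathbf z_{k+l-1}}|$ ($1\le l\le d-1$); $R_k=1/(2|\underline{\mathbf z_{k+1}}|\det\underline\Lambda_{k,d-1})$; when $\underline{\mathbf z_k},\dots,\underline{\mathbf z_{k+d-2}}$ are linearly independent, $\boldsymbol\alpha_k$ is the unique point of $\pi_d$ orthogonal to $\mathbf z_k,\dots,\mathbf z_{k+d-2}$ and $\mathfrak S_k=\{\mathbf x\in\pi_d:|\mathbf x-\boldsymbol\alpha_k|\le R_k\}$, a closed ball in $\pi_d$ whose interior is taken relative to $\pi_d$. Whenever $\boldsymbol\alpha_k$ or $\mathfrak S_k$ appears it is implicitly assumed well defined. *)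

theory Defs
  imports Main "HOL-Library.Multiset" "Jordan_Normal_Form.Determinant"
begin

(* Vectors of R^n are functions nat => real, coordinates indexed 1..n.
   A family of vectors z_1, z_2, ... is a function nat => nat => int
   (z k i = i-th coordinate of z_k). *)

definition ip :: "nat \<Rightarrow> (nat \<Rightarrow> real) \<Rightarrow> (nat \<Rightarrow> real) \<Rightarrow> real" where
  "ip n x y = (\<Sum>i=1..n. x i * y i)"

definition vnorm :: "nat \<Rightarrow> (nat \<Rightarrow> real) \<Rightarrow> real" where
  "vnorm n x = sqrt (ip n x x)"

(* |u_k /\ ... /\ u_{k+l-1}| in R^n : square root of the Gram determinant *)
definition wedge_norm :: "nat \<Rightarrow> (nat \<Rightarrow> nat \<Rightarrow> real) \<Rightarrow> nat \<Rightarrow> nat \<Rightarrow> real" where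
  "wedge_norm n u k l = sqrt (det (mat l l (\<lambda>(a,b). ip n (u (k+a)) (u (k+b)))))"

definition zr :: "(nat \<Rightarrow> nat \<Rightarrow> int) \<Rightarrow> nat \<Rightarrow> nat \<Rightarrow> real" where
  "zr z k i = real_of_int (z k i)"

(* underline z_k is zr z k viewed in R^(d-1), i.e. only coordinates 1..d-1 are used *)
definition detLam :: "nat \<Rightarrow> (nat \<Rightarrow> nat \<Rightarrow> int) \<Rightarrow> nat \<Rightarrow> nat \<Rightarrow> real" where
  "detLam d z k l = wedge_norm (d-1) (zr z) k l"

definition Rk :: "nat \<Rightarrow> (nat \<Rightarrow> nat \<Rightarrow> int) \<Rightarrow> nat \<Rightarrow> real" where
  "Rk d z k = 1 / (2 * vnorm (d-1) (zr z (k+1)) * detLam d z k (d-1))"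

definition plane :: "nat \<Rightarrow> (nat \<Rightarrow> real) set" where
  "plane d = {x. x d = 1 \<and> (\<forall>i. i \<notin> {1..d} \<longrightarrow> x i = 0)}"

definition under_indep :: "nat \<Rightarrow> (nat \<Rightarrow> nat \<Rightarrow> int) \<Rightarrow> nat \<Rightarrow> bool" where
  "under_indep d z k = (\<forall>c::nat \<Rightarrow> real.
      (\<forall>i\<in>{1..d-1}. (\<Sum>j=k..k+d-2. c j * zr z j i) = 0) \<longrightarrow> (\<forall>j\<in>{k..k+d-2}. c j = 0))"

definition alpha :: "nat \<Rightarrow> (nat \<Rightarrow> nat \<Rightarrow> int) \<Rightarrow> nat \<Rightarrow> (nat \<Rightarrow> real)" where
  "alpha d z k = (THE x. x \<in> plane d \<and> (\<forall>j\<in>{k..k+d-2}. ip d x (zr z j) = 0))"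

definition Sk :: "nat \<Rightarrow> (nat \<Rightarrow> nat \<Rightarrow> int) \<Rightarrow> nat \<Rightarrow> (nat \<Rightarrow> real) set" where
  "Sk d z k = {x \<in> plane d. vnorm d (x - alpha d z k) \<le> Rk d z k}"

definition relint_plane :: "nat \<Rightarrow> (nat \<Rightarrow> real) set \<Rightarrow> (nat \<Rightarrow> real) set" where
  "relint_plane d A = {x \<in> A. \<exists>e>0. \<forall>y\<in>plane d. vnorm d (y - x) < e \<longrightarrow> y \<in> A}"

definition Zbasis :: "nat \<Rightarrow> (nat \<Rightarrow> nat \<Rightarrow> int) \<Rightarrow> bool" where
  "Zbasis d z = ((\<forall>v::nat \<Rightarrow> int. \<exists>c::nat \<Rightarrow> int. \<forall>i\<in>{1..d}. v i = (\<Sum>k=1..d. c k * z k i)) \<and>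
     (\<forall>c::nat \<Rightarrow> int. (\<forall>i\<in>{1..d}. (\<Sum>k=1..d. c k * z k i) = 0) \<longrightarrow> (\<forall>k\<in>{1..d}. c k = 0)))"

end

theory Submission imports Defs "HOL-Analysis.L2_Norm" begin

lemma sum_shift1: "(\<Sum>i=1..d. h i) = (\<Sum>k<d. h (Suc k)::'a::comm_monoid_add)"
  by (induction d) (auto simp: atLeastAtMostSuc_conv add.commute)

lemma cof_row: assumes A: "A \<in> carrier_mat n n" and i: "i < n" and j: "j < n"
  shows "(\<Sum>k<n. A$$(i,k) * cofactor A j k) = (if i = j then det A else 0)"
proof -
  have "(A * adj_mat A) $$ (i,j) = (det A \<cdot>\<^sub>m 1\<^sub>m n) $$ (i,j)" using adj_mat(2)[OF A] by simp
  moreover have "(A * adj_mat A) $$ (i,j) = (\<Sum>k<n. A$$(i,k) * cofactor A j k)"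
    using A i j unfolding adj_mat_def by (subst index_mult_mat) (auto simp: scalar_prod_def lessThan_atLeast0)
  ultimately show ?thesis using i j by simp
qed


lemma cof_col: assumes A: "A \<in> carrier_mat n n" and k: "k < n" and j: "j < n"
  shows "(\<Sum>i<n. cofactor A i k * A$$(i,j)) = (if k = j then det A else 0)"
proof -
  have "(adj_mat A * A) $$ (k,j) = (det A \<cdot>\<^sub>m 1\<^sub>m n) $$ (k,j)" using adj_mat(3)[OF A] by simp
  moreover have "(adj_mat A * A) $$ (k,j) = (\<Sum>i<n. cofactor A i k * A$$(i,j))"
    using A k j unfolding adj_mat_def by (subst index_mult_mat) (auto simp: scalar_prod_def lessThan_atLeast0)
  ultimately show ?thesis using k j by simp
qed

lemma adj_solve: assumes A: "A \<in> carrier_mat n n" and k: "k < n"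
  shows "det A * y k = (\<Sum>i<n. cofactor A i k * (\<Sum>j<n. A$$(i,j) * y j))"
proof -
  have "(\<Sum>i<n. cofactor A i k * (\<Sum>j<n. A$$(i,j) * y j)) = (\<Sum>i<n. \<Sum>j<n. y j * (cofactor A i k * A$$(i,j)))"
    by (simp add: sum_distrib_left mult_ac)
  also have "\<dots> = (\<Sum>j<n. \<Sum>i<n. y j * (cofactor A i k * A$$(i,j)))"
    by (rule sum.swap)
  also have "\<dots> = (\<Sum>j<n. y j * (\<Sum>i<n. cofactor A i k * A$$(i,j)))"
    by (simp add: sum_distrib_left)
  also have "\<dots> = (\<Sum>j<n. y j * (if k = j then det A else 0))"
    using cof_col[OF A k] by simp
  also have "\<dots> = det A * y k" using k by (simp add: if_distrib cong: if_cong)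
  finally show ?thesis ..
qed


lemma sum_shiftk: "(\<Sum>j=k..k+m. h j) = (\<Sum>a<Suc m. h (k+a)::'a::comm_monoid_add)"
  by (induction m) (auto simp: add.commute)

lemma ip_shift: "ip n f g = (\<Sum>b<n. f (Suc b) * g (Suc b))"
  unfolding ip_def by (rule sum_shift1)

lemma gram_sq: assumes U: "U \<in> carrier_mat n n"
  and e: "\<And>a b. a < n \<Longrightarrow> b < n \<Longrightarrow> U$$(a,b) = u a (Suc b)"
  shows "det (mat n n (\<lambda>(a,b). ip n (u a) (u b))) = (det U)^2"
proof -
  have "mat n n (\<lambda>(a,b). ip n (u a) (u b)) = U * transpose_mat U"
    using U by (intro eq_matI) (auto simp: ip_shift scalar_prod_def e lessThan_atLeast0 intro!: sum.cong)
  moreover have "det (U * transpose_mat U) = det U * det U"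
    using U by (simp add: det_mult[OF U] det_transpose)
  ultimately show ?thesis by (simp add: power2_eq_square)
qed


lemma indep_det: assumes ui: "under_indep d z k" and d: "d \<ge> 2" and U: "U \<in> carrier_mat (d-1) (d-1)"
  and e: "\<And>a b. a < d-1 \<Longrightarrow> b < d-1 \<Longrightarrow> U$$(a,b) = zr z (k+a) (Suc b)"
  shows "det U \<noteq> 0"
proof
  assume "det U = 0"
  then have "det (transpose_mat U) = 0" using det_transpose[OF U] by simp
  then obtain v where v: "v \<in> carrier_vec (d-1)" "v \<noteq> 0\<^sub>v (d-1)" "transpose_mat U *\<^sub>v v = 0\<^sub>v (d-1)"
    using det_0_iff_vec_prod_zero_field[of "transpose_mat U" "d-1"] U by auto
  define c where "c j = v $ (j - k)" for j
  have "\<forall>i\<in>{1..d-1}. (\<Sum>j=k..k+(d-2). c j * zr z j i) = 0"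
  proof
    fix i assume i: "i \<in> {1..d-1}"
    have "(\<Sum>j=k..k+(d-2). c j * zr z j i) = (\<Sum>a<Suc (d-2). c (k+a) * zr z (k+a) i)"
      by (rule sum_shiftk)
    also have "\<dots> = (\<Sum>a<d-1. v $ a * U $$ (a, i-1))"
      using d i by (intro sum.cong) (auto simp: c_def e)
    also have "\<dots> = (transpose_mat U *\<^sub>v v) $ (i-1)"
      using U v(1) i by (subst index_mult_mat_vec) (auto simp: scalar_prod_def lessThan_atLeast0 mult.commute intro!: sum.cong)
    also have "\<dots> = 0"
    proof -
      have "i - 1 < d - 1" using i d by auto
      then show ?thesis using v(3) by simp
    qed
    finally show "(\<Sum>j=k..k+(d-2). c j * zr z j i) = 0" .
  qed
  moreover have eq: "k + d - 2 = k + (d-2)" using d by simp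
  ultimately have "\<forall>j\<in>{k..k+(d-2)}. c j = 0" using ui unfolding under_indep_def eq by blast
  then have "\<forall>a<d-1. v $ a = 0"
  proof (intro allI impI)
    fix a assume "\<forall>j\<in>{k..k+(d-2)}. c j = 0" "a < d-1"
    then have "c (k+a) = 0" by auto
    then show "v $ a = 0" by (simp add: c_def)
  qed
  then have "v = 0\<^sub>v (d-1)" using v(1) by (intro eq_vecI) auto
  with v(2) show False by simp
qed


definition MI :: "nat \<Rightarrow> (nat \<Rightarrow> nat \<Rightarrow> int) \<Rightarrow> int mat" where
  "MI d z = mat d d (\<lambda>(i,j). z (Suc i) (Suc j))"

lemma detMI: assumes "Zbasis d z" shows "\<bar>det (MI d z)\<bar> = 1"
proof -
  obtain cc where cc: "\<And>v i. i\<in>{1..d} \<Longrightarrow> v i = (\<Sum>k=1..d. cc v k * z k i)"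
    using assms unfolding Zbasis_def by metis
  define ev where "ev i = (\<lambda>i'. if i' = Suc i then 1 else 0 :: int)" for i
  define Ci where "Ci = mat d d (\<lambda>(i,k). cc (ev i) (Suc k))"
  have CM: "Ci * MI d z = 1\<^sub>m d"
  proof (rule eq_matI)
    fix i j assume i: "i < dim_row (1\<^sub>m d :: int mat)" and j: "j < dim_col (1\<^sub>m d :: int mat)"
    have "(Ci * MI d z) $$ (i,j) = (\<Sum>k<d. cc (ev i) (Suc k) * z (Suc k) (Suc j))"
      using i j by (subst index_mult_mat) (auto simp: Ci_def MI_def scalar_prod_def lessThan_atLeast0)
    also have "\<dots> = (\<Sum>k=1..d. cc (ev i) k * z k (Suc j))" by (rule sum_shift1[symmetric])
    also have "\<dots> = ev i (Suc j)" using cc[of "Suc j" "ev i"] j by simp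
    finally show "(Ci * MI d z) $$ (i,j) = 1\<^sub>m d $$ (i,j)" using i j by (simp add: ev_def)
  qed (auto simp: Ci_def MI_def)
  have "det Ci * det (MI d z) = 1"
    using det_mult[of Ci d "MI d z"] CM by (simp add: Ci_def MI_def)
  then show ?thesis by (auto simp: zmult_eq_1_iff)
qed


lemma ip_split: "ip (Suc n) x w = (\<Sum>b<n. x (Suc b) * w (Suc b)) + x (Suc n) * w (Suc n)"
  by (simp add: ip_shift)

lemma plane_unique: assumes d: "d = Suc n" and x: "x \<in> plane d" and x': "x' \<in> plane d"
  and hx: "\<And>a. a < n \<Longrightarrow> ip d x (zr z (k+a)) = 0"
  and hx': "\<And>a. a < n \<Longrightarrow> ip d x' (zr z (k+a)) = 0"
  and U: "U \<in> carrier_mat n n" and e: "\<And>a b. a < n \<Longrightarrow> b < n \<Longrightarrow> U$$(a,b) = zr z (k+a) (Suc b)"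
  and dU: "det U \<noteq> 0"
  shows "x = x'"
proof -
  define y where "y b = x (Suc b) - x' (Suc b)" for b
  have xd: "x (Suc n) = 1" "x' (Suc n) = 1" using x x' d by (auto simp: plane_def)
  have row0: "(\<Sum>b<n. U$$(a,b) * y b) = 0" if a: "a < n" for a
  proof -
    have "(\<Sum>b<n. U$$(a,b) * y b) = (\<Sum>b<n. x (Suc b) * zr z (k+a) (Suc b)) - (\<Sum>b<n. x' (Suc b) * zr z (k+a) (Suc b))"
      using a unfolding sum_subtractf[symmetric] by (intro sum.cong) (auto simp: y_def e algebra_simps)
    also have "\<dots> = ip d x (zr z (k+a)) - ip d x' (zr z (k+a))"
      using xd by (simp add: d ip_split)
    also have "\<dots> = 0" using hx hx' a by simp
    finally show ?thesis .
  qed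
  have y0: "y b = 0" if b: "b < n" for b
  proof -
    have "det U * y b = (\<Sum>i<n. cofactor U i b * (\<Sum>j<n. U$$(i,j) * y j))"
      by (rule adj_solve[OF U b])
    also have "\<dots> = 0" using row0 by simp
    finally show ?thesis using dU by simp
  qed
  show ?thesis
  proof
    fix i
    show "x i = x' i"
    proof (cases "i \<in> {1..d}")
      case True
      then consider "i = Suc n" | b where "b < n" "i = Suc b" using d
        by (cases i) (auto simp: le_less)
      then show ?thesis
      proof cases
        case 1 then show ?thesis using xd by simp
      next
        case 2 then show ?thesis using y0[of b] by (simp add: y_def)
      qed
    next
      case False then show ?thesis using x x' by (auto simp: plane_def)
    qed
  qed
qed


lemma cof_vec_gram: assumes U: "(U :: real mat) \<in> carrier_mat n n" and n: "n \<ge> 1" and dU: "det U \<noteq> 0"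
  shows "det (mat (n-1) (n-1) (\<lambda>(a,b). \<Sum>k<n. U$$(Suc a,k) * U$$(Suc b,k))) = (\<Sum>k<n. (cofactor U 0 k)^2)"
proof -
  define c where "c k = cofactor U 0 k" for k
  define S where "S = (\<Sum>k<n. (c k)^2)"
  define W where "W = mat n n (\<lambda>(i,j). if i = 0 then c j else U$$(i,j))"
  define G where "G = mat (n-1) (n-1) (\<lambda>(a,b). \<Sum>k<n. U$$(Suc a,k) * U$$(Suc b,k))"
  have W: "W \<in> carrier_mat n n" by (simp add: W_def)
  have n0: "0 < n" using n by simp
  have delW: "mat_delete W 0 k = mat_delete U 0 k" for k
    using U by (intro eq_matI) (auto simp: mat_delete_def W_def)
  have cofW: "cofactor W 0 k = c k" for k by (simp add: cofactor_def delW c_def)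
  have detW: "det W = S"
  proof -
    have "det W = (\<Sum>j<n. W$$(0,j) * cofactor W 0 j)" by (rule laplace_expansion_row[OF W n0])
    also have "\<dots> = (\<Sum>j<n. W$$(0,j) * c j)" by (simp only: cofW)
    also have "\<dots> = S" unfolding S_def by (intro sum.cong) (auto simp: W_def power2_eq_square)
    finally show ?thesis .
  qed
  define WW where "WW = W * transpose_mat W"
  have WWc: "WW \<in> carrier_mat n n" using W by (simp add: WW_def)
  have dWW: "det WW = S^2"
    using det_mult[OF W, of "transpose_mat W"] det_transpose[OF W] W by (simp add: WW_def detW power2_eq_square)
  have WWe: "WW $$ (i,j) = (\<Sum>k<n. W$$(i,k) * W$$(j,k))" if "i < n" "j < n" for i j
    using that W unfolding WW_def by (subst index_mult_mat) (auto simp: scalar_prod_def lessThan_atLeast0)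
  have col0: "WW $$ (i,0) = (if i = 0 then S else 0)" if i: "i < n" for i
  proof (cases "i = 0")
    case True then show ?thesis using WWe[OF i n0] n0 by (simp add: W_def S_def power2_eq_square)
  next
    case False
    have "WW $$ (i,0) = (\<Sum>k<n. U$$(i,k) * cofactor U 0 k)"
      using WWe[OF i n0] False i by (simp add: W_def c_def)
    also have "\<dots> = 0" using cof_row[OF U i n0] False by simp
    finally show ?thesis using False by simp
  qed
  have "det WW = (\<Sum>i<n. WW $$ (i,0) * cofactor WW i 0)"
    by (rule laplace_expansion_column[OF WWc n0])
  also have "\<dots> = (\<Sum>i<n. if i = 0 then S * cofactor WW 0 0 else 0)"
    by (intro sum.cong) (auto simp: col0)
  also have "\<dots> = S * cofactor WW 0 0"
    using n0 by simp
  finally have dd: "det WW = S * cofactor WW 0 0" .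
  have "mat_delete WW 0 0 = G"
    using WWc n0 by (intro eq_matI) (auto simp: mat_delete_def G_def WWe W_def)
  then have "S^2 = S * det G" using dd by (simp add: dWW cofactor_def)
  moreover have "S \<noteq> 0"
  proof
    assume "S = 0"
    then have "\<forall>k\<in>{..<n}. (c k)^2 = 0" using sum_nonneg_eq_0_iff[of "{..<n}" "\<lambda>k. (c k)^2"] unfolding S_def by simp
    then have "\<forall>k<n. c k = 0" by simp
    then have "(\<Sum>k<n. U$$(0,k) * cofactor U 0 k) = 0" by (simp add: c_def)
    then show False using cof_row[OF U n0 n0] dU by simp
  qed
  ultimately have "det G = S" by (simp add: power2_eq_square)
  then show ?thesis by (simp add: G_def S_def c_def)
qed


lemma vnorm_L2: "vnorm n f = L2_set f {1..n}"
  unfolding vnorm_def ip_def L2_set_def by (simp add: power2_eq_square)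

lemma vnorm_tri: "vnorm n (\<lambda>i. f i + g i) \<le> vnorm n f + vnorm n g"
  unfolding vnorm_L2 by (rule L2_set_triangle_ineq)

lemma vnorm_pos: assumes "i \<in> {1..n}" "w i \<noteq> 0" shows "vnorm n w > 0"
proof -
  have "0 < (\<Sum>i=1..n. w i * w i)"
    using assms by (intro sum_pos2[where i=i]) (auto simp: zero_less_mult_iff linorder_neq_iff)
  then show ?thesis unfolding vnorm_def ip_def by simp
qed

lemma indep_nz: assumes "under_indep d z k" "j \<in> {k..k+d-2}" shows "\<exists>i\<in>{1..d-1}. zr z j i \<noteq> 0"
proof (rule ccontr)
  assume "\<not> ?thesis"
  then have h: "\<forall>i\<in>{1..d-1}. zr z j i = 0" by simp
  define c where "c j' = (if j' = j then 1 else 0::real)" for j'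
  have "\<forall>i\<in>{1..d-1}. (\<Sum>j'=k..k+d-2. c j' * zr z j' i) = 0"
  proof
    fix i assume i: "i \<in> {1..d-1}"
    have "(\<Sum>j'=k..k+d-2. c j' * zr z j' i) = (\<Sum>j'=k..k+d-2. if j' = j then zr z j i else 0)"
      by (intro sum.cong) (auto simp: c_def)
    also have "\<dots> = 0" using h i assms(2) by simp
    finally show "(\<Sum>j'=k..k+d-2. c j' * zr z j' i) = 0" .
  qed
  then have "c j = 0" using assms unfolding under_indep_def by blast
  then show False by (simp add: c_def)
qed


lemma arith_final: fixes A1 A2 A3 D1 D2 g :: real
  assumes "A2 > 0" "A3 > 0" "D1 > 0" "D2 > 0" "g \<ge> 0" "D1 \<le> A1*g" "A1 \<le> A3" "D2 > 3*A2*g"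
  shows "1/(2*A3*D2) < 1/(2*A2*D1)/3" and "g/(D1*D2) + 1/(2*A3*D2) < 1/(2*A2*D1)"
proof -
  have "A1*g \<le> A3*g" using assms by (simp add: mult_right_mono)
  then have h1: "A2*D1 \<le> A2*(A3*g)" using assms by (simp add: mult_left_mono)
  have h2: "A3*(3*A2*g) < A3*D2" using assms by simp
  have "6*A2*D1 < 2*A3*D2" using h1 h2 by (simp add: algebra_simps)
  then show "1/(2*A3*D2) < 1/(2*A2*D1)/3" using assms by (simp add: field_simps)
  have "2*A2*A3*g + A2*D1 < A3*D2" using h1 h2 by (simp add: algebra_simps)
  then have "D1*(2*A2*A3*g + A2*D1) < D1*(A3*D2)" using assms by simp
  then have "A2*(D1*(D1*2)) + A2*(A3*(D1*(g*4))) < A3*(D1*(D2*2))" by (simp add: algebra_simps)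
  then show "g/(D1*D2) + 1/(2*A3*D2) < 1/(2*A2*D1)" using assms by (simp add: field_simps)
qed

theorem lemma6:
  fixes d :: nat and z :: "nat \<Rightarrow> nat \<Rightarrow> int"
  assumes "d \<ge> 3"
    and "Zbasis d z"
    and "under_indep d z 1" and "under_indep d z 2"
    and "vnorm (d-1) (zr z 3) \<ge> vnorm (d-1) (zr z 1)"
    and "detLam d z 2 (d-1) > 3 * vnorm (d-1) (zr z 2) * detLam d z 2 (d-2)"
  shows "Sk d z 2 \<subseteq> relint_plane d (Sk d z 1) \<and> Rk d z 2 < Rk d z 1 / 3"
proof -
  define n where "n = d - 1"
  have dn: "d = Suc n" and n2: "n \<ge> 2" using assms(1) by (auto simp: n_def)
  define M where "M = map_mat real_of_int (MI d z)"
  have Mc: "M \<in> carrier_mat d d" by (simp add: M_def MI_def)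
  have Me: "M$$(i,j) = zr z (Suc i) (Suc j)" if "i < d" "j < d" for i j
    using that by (simp add: M_def MI_def zr_def)
  have detM: "\<bar>det M\<bar> = 1"
  proof -
    have "det M = real_of_int (det (MI d z))" unfolding M_def by (rule of_int_hom.hom_det)
    then show ?thesis using detMI[OF assms(2)] by simp
  qed
  have dimM: "dim_row M = d" "dim_col M = d" using Mc by auto
  define U1 where "U1 = mat_delete M n n"
  define U2 where "U2 = mat_delete M 0 n"
  have U1c: "U1 \<in> carrier_mat n n" using mat_delete_carrier[OF Mc] by (simp add: U1_def dn)
  have U2c: "U2 \<in> carrier_mat n n" using mat_delete_carrier[OF Mc] by (simp add: U2_def dn)
  have U1e: "U1$$(a,b) = zr z (1+a) (Suc b)" if "a < n" "b < n" for a b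
    using that by (simp add: U1_def mat_delete_def Me dimM dn)
  have U2e: "U2$$(a,b) = zr z (2+a) (Suc b)" if "a < n" "b < n" for a b
    using that by (simp add: U2_def mat_delete_def Me dimM dn)
  have dU1: "det U1 \<noteq> 0"
    using indep_det[OF assms(3), of U1] U1c U1e assms(1) by (simp add: n_def)
  have dU2: "det U2 \<noteq> 0"
    using indep_det[OF assms(4), of U2] U2c U2e assms(1) by (simp add: n_def)
  have L1: "detLam d z 1 (d-1) = \<bar>det U1\<bar>"
    unfolding detLam_def wedge_norm_def using gram_sq[OF U1c, of "\<lambda>a. zr z (1+a)"] U1e
    by (simp add: n_def)
  have L2: "detLam d z 2 (d-1) = \<bar>det U2\<bar>"
    unfolding detLam_def wedge_norm_def using gram_sq[OF U2c, of "\<lambda>a. zr z (2+a)"] U2e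
    by (simp add: n_def)
  define c where "c k = cofactor U1 0 k" for k
  define g where "g = sqrt (\<Sum>k<n. (c k)^2)"
  have GV: "detLam d z 2 (d-2) = g"
  proof -
    have "mat (d-2) (d-2) (\<lambda>(a,b). ip (d-1) (zr z (2+a)) (zr z (2+b)))
        = mat (n-1) (n-1) (\<lambda>(a,b). \<Sum>k<n. U1$$(Suc a,k) * U1$$(Suc b,k))"
      by (intro eq_matI) (auto simp: n_def ip_shift U1e intro!: sum.cong)
    then show ?thesis
      unfolding detLam_def wedge_norm_def g_def c_def
      using cof_vec_gram[OF U1c _ dU1] n2 by simp
  qed
  have C1: "cofactor M n n = det U1" by (simp add: cofactor_def U1_def)
  have C2: "cofactor M 0 n = (-1)^n * det U2" by (simp add: cofactor_def U2_def)
  define C2' where "C2' = cofactor M 0 n"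
  have C2nz: "C2' \<noteq> 0" using dU2 by (simp add: C2'_def C2)
  have C2abs: "\<bar>C2'\<bar> = \<bar>det U2\<bar>" by (simp add: C2'_def C2 abs_mult)
  define a1 where "a1 i = (if i \<in> {1..d} then cofactor M n (i-1) / det U1 else 0)" for i
  define a2 where "a2 i = (if i \<in> {1..d} then cofactor M 0 (i-1) / C2' else 0)" for i
  have ip1: "ip d a1 (zr z j) = (if j = d then det M / det U1 else 0)" if j: "j \<in> {1..d}" for j
  proof -
    have "ip d a1 (zr z j) = (\<Sum>b<d. M$$(j-1,b) * cofactor M n b) / det U1"
      unfolding ip_shift sum_divide_distrib using j by (intro sum.cong) (auto simp: a1_def Me)
    also have "\<dots> = (if j - 1 = n then det M else 0) / det U1"
    proof -
      have "j - 1 < d" "n < d" using j dn by auto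
      from cof_row[OF Mc this] show ?thesis by simp
    qed
    finally show ?thesis using j dn by auto
  qed
  have ip2: "ip d a2 (zr z j) = (if j = 1 then det M / C2' else 0)" if j: "j \<in> {1..d}" for j
  proof -
    have "ip d a2 (zr z j) = (\<Sum>b<d. M$$(j-1,b) * cofactor M 0 b) / C2'"
      unfolding ip_shift sum_divide_distrib using j by (intro sum.cong) (auto simp: a2_def Me)
    also have "\<dots> = (if j - 1 = 0 then det M else 0) / C2'"
    proof -
      have "j - 1 < d" "0 < d" using j dn by auto
      from cof_row[OF Mc this] show ?thesis by simp
    qed
    finally show ?thesis using j dn by auto
  qed
  have a1p: "a1 \<in> plane d" using dU1 dn C1 by (auto simp: plane_def a1_def)
  have a2p: "a2 \<in> plane d" using C2nz dn by (auto simp: plane_def a2_def C2'_def)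
  have al1: "alpha d z 1 = a1"
    unfolding alpha_def
  proof (rule the_equality)
    show "a1 \<in> plane d \<and> (\<forall>j\<in>{1..1+d-2}. ip d a1 (zr z j) = 0)"
      using a1p ip1 dn by auto
  next
    fix x assume x: "x \<in> plane d \<and> (\<forall>j\<in>{1..1+d-2}. ip d x (zr z j) = 0)"
    show "x = a1"
    proof (rule plane_unique[OF dn _ a1p _ _ U1c _ dU1, where k=1 and z=z])
      show "x \<in> plane d" using x by simp
      show "ip d x (zr z (1+a)) = 0" if "a < n" for a using x that dn by auto
      show "ip d a1 (zr z (1+a)) = 0" if "a < n" for a using ip1[of "1+a"] that dn by auto
      show "U1$$(a,b) = zr z (1+a) (Suc b)" if "a < n" "b < n" for a b using U1e that by simp
    qed
  qed
  have al2: "alpha d z 2 = a2"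
    unfolding alpha_def
  proof (rule the_equality)
    show "a2 \<in> plane d \<and> (\<forall>j\<in>{2..2+d-2}. ip d a2 (zr z j) = 0)"
      using a2p ip2 dn by auto
  next
    fix x assume x: "x \<in> plane d \<and> (\<forall>j\<in>{2..2+d-2}. ip d x (zr z j) = 0)"
    show "x = a2"
    proof (rule plane_unique[OF dn _ a2p _ _ U2c _ dU2, where k=2 and z=z])
      show "x \<in> plane d" using x by simp
      show "ip d x (zr z (2+a)) = 0" if "a < n" for a using x that dn by auto
      show "ip d a2 (zr z (2+a)) = 0" if "a < n" for a using ip2[of "2+a"] that dn by auto
      show "U2$$(a,b) = zr z (2+a) (Suc b)" if "a < n" "b < n" for a b using U2e that by simp
    qed
  qed
  define s where "s = - det M / C2'"
  have a1n: "a1 (Suc n) = 1" using dU1 C1 dn by (simp add: a1_def)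
  have a2n: "a2 (Suc n) = 1" using C2nz dn by (simp add: a2_def C2'_def)
  have row: "(\<Sum>b<n. U1$$(a,b) * (a1 (Suc b) - a2 (Suc b))) = (if a = 0 then s else 0)" if a: "a < n" for a
  proof -
    have "(\<Sum>b<n. U1$$(a,b) * (a1 (Suc b) - a2 (Suc b)))
        = (\<Sum>b<n. a1 (Suc b) * zr z (Suc a) (Suc b)) - (\<Sum>b<n. a2 (Suc b) * zr z (Suc a) (Suc b))"
      unfolding sum_subtractf[symmetric] using a by (intro sum.cong) (auto simp: U1e algebra_simps)
    also have "\<dots> = ip d a1 (zr z (Suc a)) - ip d a2 (zr z (Suc a))"
      using a1n a2n by (simp add: dn ip_split)
    also have "\<dots> = (if a = 0 then s else 0)"
      using ip1[of "Suc a"] ip2[of "Suc a"] a dn by (auto simp: s_def)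
    finally show ?thesis .
  qed
  have yc: "a1 (Suc b) - a2 (Suc b) = s * c b / det U1" if b: "b < n" for b
  proof -
    have "det U1 * (a1 (Suc b) - a2 (Suc b)) = (\<Sum>i<n. cofactor U1 i b * (\<Sum>j<n. U1$$(i,j) * (a1 (Suc j) - a2 (Suc j))))"
      by (rule adj_solve[OF U1c b])
    also have "\<dots> = (\<Sum>i<n. if i = 0 then cofactor U1 0 b * s else 0)"
      by (intro sum.cong) (auto simp: row)
    also have "\<dots> = s * c b" using n2 by (simp add: c_def)
    finally show ?thesis using dU1 by (simp add: field_simps)
  qed
  have nrm: "vnorm d (a2 - a1) = \<bar>s / det U1\<bar> * g"
  proof -
    have "ip d (a2 - a1) (a2 - a1) = (\<Sum>b<n. (s / det U1)^2 * (c b)^2)"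
      unfolding dn ip_split using a1n a2n yc
      by (auto simp: power2_eq_square algebra_simps intro!: sum.cong)
    also have "\<dots> = (s / det U1)^2 * (\<Sum>b<n. (c b)^2)" by (simp add: sum_distrib_left)
    finally show ?thesis unfolding vnorm_def g_def by (simp add: real_sqrt_mult)
  qed
  have sabs: "\<bar>s\<bar> = 1 / \<bar>det U2\<bar>" using detM C2abs by (simp add: s_def abs_div)
  define A1 where "A1 = vnorm (d-1) (zr z 1)"
  define A2 where "A2 = vnorm (d-1) (zr z 2)"
  define A3 where "A3 = vnorm (d-1) (zr z 3)"
  have CS: "\<bar>det U1\<bar> \<le> A1 * g"
  proof -
    have "det U1 = (\<Sum>k<n. U1$$(0,k) * cofactor U1 0 k)"
      using cof_row[OF U1c, of 0 0] n2 by simp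
    also have "\<dots> = (\<Sum>k<n. zr z 1 (Suc k) * c k)" by (intro sum.cong) (auto simp: U1e c_def)
    finally have "\<bar>det U1\<bar> \<le> (\<Sum>k<n. \<bar>zr z 1 (Suc k)\<bar> * \<bar>c k\<bar>)"
      by (simp add: sum_abs[THEN order_trans] abs_mult)
    also have "\<dots> \<le> L2_set (\<lambda>k. zr z 1 (Suc k)) {..<n} * L2_set c {..<n}"
      by (rule L2_set_mult_ineq)
    also have "L2_set (\<lambda>k. zr z 1 (Suc k)) {..<n} = A1"
      unfolding A1_def vnorm_def ip_shift L2_set_def by (simp add: n_def power2_eq_square)
    also have "L2_set c {..<n} = g" unfolding g_def L2_set_def ..
    finally show ?thesis .
  qed
  have A2p: "A2 > 0"
  proof -
    obtain i where "i \<in> {1..d-1}" "zr z 2 i \<noteq> 0" using indep_nz[OF assms(4), of 2] assms(1) by auto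
    then show ?thesis unfolding A2_def by (rule vnorm_pos)
  qed
  have A3p: "A3 > 0"
  proof -
    obtain i where "i \<in> {1..d-1}" "zr z 3 i \<noteq> 0" using indep_nz[OF assms(4), of 3] assms(1) by auto
    then show ?thesis unfolding A3_def by (rule vnorm_pos)
  qed
  have g0: "g \<ge> 0" by (simp add: g_def sum_nonneg)
  have E: "vnorm d (a2 - a1) = g / (\<bar>det U1\<bar> * \<bar>det U2\<bar>)"
    using nrm sabs by (simp add: abs_div)
  have R1: "Rk d z 1 = 1 / (2 * A2 * \<bar>det U1\<bar>)" unfolding Rk_def A2_def L1 one_add_one ..
  have R2: "Rk d z 2 = 1 / (2 * A3 * \<bar>det U2\<bar>)" unfolding Rk_def A3_def L2 by simp
  have hyp: "\<bar>det U2\<bar> > 3 * A2 * g" using assms(6) L2 GV by (simp add: A2_def)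
  have A13: "A1 \<le> A3" using assms(5) by (simp add: A1_def A3_def)
  note ar = arith_final[of A2 A3 "\<bar>det U1\<bar>" "\<bar>det U2\<bar>" g A1, OF A2p A3p _ _ g0 CS A13 hyp]
  have fin1: "Rk d z 2 < Rk d z 1 / 3" unfolding R1 R2 using ar(1) dU1 dU2 by simp
  have fin2: "vnorm d (a2 - a1) + Rk d z 2 < Rk d z 1" unfolding R1 R2 E using ar(2) dU1 dU2 by simp
  have incl: "Sk d z 2 \<subseteq> relint_plane d (Sk d z 1)"
  proof
    fix x assume "x \<in> Sk d z 2"
    then have xp: "x \<in> plane d" and xr: "vnorm d (x - a2) \<le> Rk d z 2" by (auto simp: Sk_def al2)
    define e where "e = Rk d z 1 - Rk d z 2 - vnorm d (a2 - a1)"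
    have e0: "e > 0" using fin2 by (simp add: e_def)
    have key: "vnorm d (y - a1) < Rk d z 1" if "vnorm d (y - x) < e" for y
    proof -
      have eq: "y - a1 = (\<lambda>i. (y - x) i + ((x - a2) i + (a2 - a1) i))" by auto
      have "vnorm d (y - a1) \<le> vnorm d (y - x) + vnorm d (\<lambda>i. (x - a2) i + (a2 - a1) i)"
        unfolding eq by (rule vnorm_tri)
      also have "vnorm d (\<lambda>i. (x - a2) i + (a2 - a1) i) \<le> vnorm d (x - a2) + vnorm d (a2 - a1)"
        by (rule vnorm_tri)
      finally show ?thesis using that xr unfolding e_def by linarith
    qed
    have "vnorm d (x - x) = 0" by (simp add: vnorm_def ip_def)
    then have "x \<in> Sk d z 1"
      using key[of x] e0 xp unfolding Sk_def al1 by auto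
    moreover have "\<forall>y\<in>plane d. vnorm d (y - x) < e \<longrightarrow> y \<in> Sk d z 1"
      using key unfolding Sk_def al1 by (auto simp: less_imp_le)
    ultimately show "x \<in> relint_plane d (Sk d z 1)" using e0 unfolding relint_plane_def by blast
  qed
  show ?thesis using incl fin1 by simp
qed

end
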